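(* Let $P_1(z)=1+12z+9z^2$, $P_2(z)=1+4z+3z^2$, $P_3(z)=1+8z+8z^2$, $P_4(z)=1+15z+45z^2+27z^3$ and $P_5(z)=1+13z+21z^2+9z^3$. For each $i$, let $N_i$ be the number of pairwise non-isomorphic connected finite simple graphs whose independence polynomial is $P_i$. Then $N_i>0$ for each $i$; in particular $N_1\ge10$, $N_2=1$, $N_3\ge25$, $N_4\ge4$ and $N_5\ge5$.
   Context: For a finite simple graph $G$, the independence polynomial is $I_G(z)=\sum_{i\ge0} a_i z^i$, where $a_i$ is the number of sets of $i$ pairwise non-adjacent vertices of $G$ (with $a_0=1$). *)

theory Defs
  imports "HOL-Computational_Algebra.Polynomial"
begin

text \<open>A finite simple graph with vertices drawn from nat: a pair (V, E) of a finite
vertex set and a set of 2-element edges {u,v} with u, v in V.\<close>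
type_synonym graph = "nat set \<times> nat set set"

definition verts :: "graph \<Rightarrow> nat set" where "verts G = fst G"
definition edges :: "graph \<Rightarrow> nat set set" where "edges G = snd G"

definition simple_graph :: "graph \<Rightarrow> bool" where
  "simple_graph G \<longleftrightarrow> finite (verts G) \<and>
     (\<forall>e\<in>edges G. \<exists>u v. u \<noteq> v \<and> u \<in> verts G \<and> v \<in> verts G \<and> e = {u, v})"

definition adj :: "graph \<Rightarrow> nat \<Rightarrow> nat \<Rightarrow> bool" where
  "adj G u v \<longleftrightarrow> {u, v} \<in> edges G"

definition connected_graph :: "graph \<Rightarrow> bool" where
  "connected_graph G \<longleftrightarrow> verts G \<noteq> {} \<and>
     (\<forall>u\<in>verts G. \<forall>v\<in>verts G. (adj G)\<^sup>*\<^sup>* u v)"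

definition independent_set :: "graph \<Rightarrow> nat set \<Rightarrow> bool" where
  "independent_set G S \<longleftrightarrow> S \<subseteq> verts G \<and> (\<forall>u\<in>S. \<forall>v\<in>S. \<not> adj G u v)"

definition indep_count :: "graph \<Rightarrow> nat \<Rightarrow> nat" where
  "indep_count G i = card {S. independent_set G S \<and> card S = i}"

definition indep_poly :: "graph \<Rightarrow> int poly" where
  "indep_poly G = (\<Sum>i\<le>card (verts G). monom (int (indep_count G i)) i)"

definition graph_iso :: "graph \<Rightarrow> graph \<Rightarrow> bool" where
  "graph_iso G H \<longleftrightarrow> (\<exists>f. bij_betw f (verts G) (verts H) \<and>
     (\<forall>u\<in>verts G. \<forall>v\<in>verts G. adj G u v \<longleftrightarrow> adj H (f u) (f v)))"

definition num_graphs_with_poly :: "int poly \<Rightarrow> nat" where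
  "num_graphs_with_poly P =
     card ({G. simple_graph G \<and> connected_graph G \<and> indep_poly G = P}
           // {(G, H). graph_iso G H})"

end

theory Submission
  imports Defs "HOL-Library.Multiset"
begin



definition adjf :: "(nat \<times> nat) list \<Rightarrow> nat \<Rightarrow> nat \<Rightarrow> bool" where
  "adjf ne u w \<longleftrightarrow> u \<noteq> w \<and> (u,w) \<notin> set ne \<and> (w,u) \<notin> set ne"

definition G_of :: "nat \<Rightarrow> (nat \<times> nat) list \<Rightarrow> graph" where
  "G_of n ne = ({..<n}, {{u,w} | u w. u < n \<and> w < n \<and> adjf ne u w})"

fun cnt :: "(nat \<Rightarrow> nat \<Rightarrow> bool) \<Rightarrow> nat list \<Rightarrow> nat \<Rightarrow> nat" where
  "cnt A [] k = (if k = 0 then 1 else 0)"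
| "cnt A (v#vs) k = (if k = 0 then 1 else cnt A vs k + cnt A (filter (\<lambda>u. \<not> A v u) vs) (k - 1))"

lemma cnt_correct:
  assumes "distinct vs" "\<And>u w. A u w \<Longrightarrow> A w u" "\<And>u. \<not> A u u"
  shows "card {S. S \<subseteq> set vs \<and> (\<forall>u\<in>S. \<forall>w\<in>S. \<not> A u w) \<and> card S = k} = cnt A vs k"
  using assms
proof (induction A vs k rule: cnt.induct)
  case (1 A k)
  then show ?case
  proof (cases "k = 0")
    case True
    have "{S. S \<subseteq> set [] \<and> (\<forall>u\<in>S. \<forall>w\<in>S. \<not> A u w) \<and> card S = k} = {{}}" using True by auto
    then show ?thesis using True by simp
  next
    case False
    have "{S. S \<subseteq> set [] \<and> (\<forall>u\<in>S. \<forall>w\<in>S. \<not> A u w) \<and> card S = k} = {}" using False by auto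
    then show ?thesis using False by simp
  qed
next
  case (2 A v vs k)
  note asm = "2.prems"(2,3)
  show ?case
  proof (cases k)
    case 0
    have "{S. S \<subseteq> set (v#vs) \<and> (\<forall>u\<in>S. \<forall>w\<in>S. \<not> A u w) \<and> card S = k} = {{}}"
    proof (rule set_eqI, rule iffI)
      fix S assume S: "S \<in> {S. S \<subseteq> set (v#vs) \<and> (\<forall>u\<in>S. \<forall>w\<in>S. \<not> A u w) \<and> card S = k}"
      then have "finite S" using finite_subset[of S "set (v#vs)"] by auto
      then show "S \<in> {{}}" using S 0 by auto
    qed (use 0 in auto)
    then show ?thesis using 0 by simp
  next
    case (Suc j)
    let ?ind = "\<lambda>S. \<forall>u\<in>S. \<forall>w\<in>S. \<not> A u w"
    let ?F1 = "{S. S \<subseteq> set vs \<and> ?ind S \<and> card S = Suc j}"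
    let ?T = "{T. T \<subseteq> set (filter (\<lambda>u. \<not> A v u) vs) \<and> ?ind T \<and> card T = j}"
    have dv: "v \<notin> set vs" "distinct vs" using "2.prems" by auto
    have eq: "{S. S \<subseteq> set (v#vs) \<and> ?ind S \<and> card S = k} = ?F1 \<union> insert v ` ?T"
    proof (rule set_eqI, rule iffI)
      fix S assume S: "S \<in> {S. S \<subseteq> set (v#vs) \<and> ?ind S \<and> card S = k}"
      have fS: "finite S" using S finite_subset[of S "set (v#vs)"] by auto
      show "S \<in> ?F1 \<union> insert v ` ?T"
      proof (cases "v \<in> S")
        case False
        then show ?thesis using S Suc by auto
      next
        case True
        have "S - {v} \<in> ?T" using S Suc True fS by (auto simp: card_Diff_singleton)
        moreover have "S = insert v (S - {v})" using True by auto
        ultimately show ?thesis by blast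
      qed
    next
      fix S assume S: "S \<in> ?F1 \<union> insert v ` ?T"
      show "S \<in> {S. S \<subseteq> set (v#vs) \<and> ?ind S \<and> card S = k}"
      proof (cases "S \<in> ?F1")
        case True then show ?thesis using Suc by auto
      next
        case False
        then obtain T where T: "T \<in> ?T" "S = insert v T" using S by auto
        have fT: "finite T" using T(1) finite_subset[of T "set vs"] by auto
        have "v \<notin> T" using T(1) dv by auto
        then have "card S = Suc j" using T fT by simp
        moreover have "?ind S" using T asm by auto
        moreover have "S \<subseteq> set (v#vs)" using T by auto
        ultimately show ?thesis using Suc by auto
      qed
    qed
    have fin1: "finite ?F1" by (rule finite_subset[of _ "Pow (set vs)"]) auto
    have fin2: "finite ?T" by (rule finite_subset[of _ "Pow (set vs)"]) auto
    have disj: "?F1 \<inter> insert v ` ?T = {}" using dv by auto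
    have inj: "inj_on (insert v) ?T"
      unfolding inj_on_def using dv by (metis (no_types, lifting) Diff_insert_absorb filter_is_subset mem_Collect_eq subset_iff)
    have "card (?F1 \<union> insert v ` ?T) = card ?F1 + card ?T"
      using card_Un_disjoint[OF fin1 finite_imageI[OF fin2] disj] card_image[OF inj] by simp
    also have "\<dots> = cnt A vs (Suc j) + cnt A (filter (\<lambda>u. \<not> A v u) vs) j"
      using "2.IH" dv Suc asm by simp
    finally show ?thesis using eq Suc by simp
  qed
qed




lemma simple_fin: "simple_graph G \<Longrightarrow> finite (verts G)"
  by (simp add: simple_graph_def)

lemma adj_sym: "adj G u v = adj G v u"
  by (simp add: adj_def insert_commute)

lemma adj_irr: "simple_graph G \<Longrightarrow> \<not> adj G u u"
  unfolding simple_graph_def adj_def by (metis doubleton_eq_iff insert_absorb2)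

lemma adj_in: "simple_graph G \<Longrightarrow> adj G u v \<Longrightarrow> u \<in> verts G \<and> v \<in> verts G"
  unfolding simple_graph_def adj_def by (metis doubleton_eq_iff)

lemma iso_refl: "graph_iso G G"
  unfolding graph_iso_def by (rule exI[of _ id]) auto

lemma iso_sym: assumes "graph_iso G H" shows "graph_iso H G"
proof -
  obtain f where f: "bij_betw f (verts G) (verts H)"
    "\<forall>u\<in>verts G. \<forall>v\<in>verts G. adj G u v \<longleftrightarrow> adj H (f u) (f v)"
    using assms unfolding graph_iso_def by blast
  let ?g = "the_inv_into (verts G) f"
  have g: "bij_betw ?g (verts H) (verts G)" using f(1) bij_betw_the_inv_into by blast
  have "\<forall>u\<in>verts H. \<forall>v\<in>verts H. adj H u v \<longleftrightarrow> adj G (?g u) (?g v)"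
  proof (intro ballI)
    fix u v assume uv: "u \<in> verts H" "v \<in> verts H"
    have "f (?g u) = u" "f (?g v) = v" using uv f(1) by (simp_all add: f_the_inv_into_f_bij_betw)
    moreover have "?g u \<in> verts G" "?g v \<in> verts G" using uv g by (auto dest: bij_betwE)
    ultimately show "adj H u v \<longleftrightarrow> adj G (?g u) (?g v)" using f(2) by metis
  qed
  then show ?thesis unfolding graph_iso_def using g by blast
qed

lemma iso_trans: assumes "graph_iso G H" "graph_iso H K" shows "graph_iso G K"
proof -
  obtain f where f: "bij_betw f (verts G) (verts H)"
    "\<forall>u\<in>verts G. \<forall>v\<in>verts G. adj G u v \<longleftrightarrow> adj H (f u) (f v)"
    using assms(1) unfolding graph_iso_def by blast
  obtain g where g: "bij_betw g (verts H) (verts K)"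
    "\<forall>u\<in>verts H. \<forall>v\<in>verts H. adj H u v \<longleftrightarrow> adj K (g u) (g v)"
    using assms(2) unfolding graph_iso_def by blast
  have "bij_betw (g \<circ> f) (verts G) (verts K)" using f(1) g(1) bij_betw_trans by blast
  moreover have "\<forall>u\<in>verts G. \<forall>v\<in>verts G. adj G u v \<longleftrightarrow> adj K ((g \<circ> f) u) ((g \<circ> f) v)"
    using f g by (auto dest: bij_betwE)
  ultimately show ?thesis unfolding graph_iso_def by blast
qed

definition "isoR = {(G, H). graph_iso G H}"

lemma equiv_isoR: "equiv UNIV isoR"
  unfolding equiv_def refl_on_def sym_def trans_def isoR_def
  using iso_refl iso_sym iso_trans by blast

lemma indep_count_gt:
  assumes "finite (verts G)" "i > card (verts G)" shows "indep_count G i = 0"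
proof -
  have "{S. independent_set G S \<and> card S = i} = {}"
    using assms card_mono unfolding independent_set_def by fastforce
  then show ?thesis unfolding indep_count_def by (metis card.empty)
qed

lemma coeff_indep_poly:
  assumes "finite (verts G)"
  shows "coeff (indep_poly G) i = int (indep_count G i)"
proof -
  have "coeff (indep_poly G) i = (\<Sum>j\<le>card (verts G). if j = i then int (indep_count G j) else 0)"
    unfolding indep_poly_def coeff_sum coeff_monom by (rule sum.cong) auto
  also have "\<dots> = (if i \<le> card (verts G) then int (indep_count G i) else 0)"
    by (simp add: sum.delta)
  also have "\<dots> = int (indep_count G i)" using indep_count_gt[OF assms] by auto
  finally show ?thesis .
qed

lemma indep_poly_eqI:
  assumes "finite (verts G)" "\<And>i. int (indep_count G i) = coeff P i"
  shows "indep_poly G = P"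
  using assms coeff_indep_poly by (intro poly_eqI) simp

lemma indep_count_1:
  assumes "simple_graph G" shows "indep_count G 1 = card (verts G)"
proof -
  have "{S. independent_set G S \<and> card S = 1} = (\<lambda>v. {v}) ` verts G"
    using adj_irr[OF assms] unfolding independent_set_def by (auto simp: card_Suc_eq)
  then show ?thesis unfolding indep_count_def by (simp add: card_image)
qed

lemma card_verts_poly:
  assumes "simple_graph G" "indep_poly G = P"
  shows "int (card (verts G)) = coeff P 1"
  using coeff_indep_poly[OF simple_fin[OF assms(1)], of 1] indep_count_1[OF assms(1)] assms(2) by simp

lemma iso_indep_count:
  assumes "graph_iso G H" "simple_graph G" "simple_graph H"
  shows "indep_count G k = indep_count H k"
proof -
  obtain f where f: "bij_betw f (verts G) (verts H)"
    "\<forall>u\<in>verts G. \<forall>v\<in>verts G. adj G u v \<longleftrightarrow> adj H (f u) (f v)"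
    using assms(1) unfolding graph_iso_def by blast
  let ?A = "{S. independent_set G S \<and> card S = k}"
  let ?B = "{S. independent_set H S \<and> card S = k}"
  have inj: "inj_on f (verts G)" using f(1) bij_betw_def by blast
  have "?B = (image f) ` ?A"
  proof (rule set_eqI, rule iffI)
    fix T assume T: "T \<in> ?B"
    let ?S = "verts G \<inter> f -` T"
    have "T \<subseteq> f ` verts G" using T f(1) unfolding independent_set_def bij_betw_def by auto
    then have TS: "T = f ` ?S" by blast
    have "independent_set G ?S" using T f unfolding independent_set_def by auto
    moreover have "card ?S = k" using T TS card_image[OF inj_on_subset[OF inj, of ?S]] by auto
    ultimately show "T \<in> (image f) ` ?A" using TS by blast
  next
    fix T assume "T \<in> (image f) ` ?A"
    then obtain S where S: "S \<in> ?A" "T = f ` S" by blast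
    have SV: "S \<subseteq> verts G" "\<forall>u\<in>S. \<forall>v\<in>S. \<not> adj G u v" using S(1) unfolding independent_set_def by auto
    have "T \<subseteq> verts H" using SV(1) S(2) f(1) unfolding bij_betw_def by auto
    moreover have "\<forall>u\<in>T. \<forall>v\<in>T. \<not> adj H u v"
    proof (intro ballI)
      fix u v assume "u \<in> T" "v \<in> T"
      then obtain a b where "a \<in> S" "b \<in> S" "u = f a" "v = f b" using S(2) by blast
      then show "\<not> adj H u v" using SV f(2) by blast
    qed
    ultimately have "independent_set H T" unfolding independent_set_def by blast
    moreover have "card T = k" using S card_image[OF inj_on_subset[OF inj, of S]]
      unfolding independent_set_def by auto
    ultimately show "T \<in> ?B" by blast
  qed
  moreover have "inj_on (image f) ?A"
  proof (rule inj_onI)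
    fix S S' assume "S \<in> ?A" "S' \<in> ?A" "f ` S = f ` S'"
    then show "S = S'" using inj_on_image_eq_iff[OF inj] unfolding independent_set_def by blast
  qed
  ultimately show ?thesis unfolding indep_count_def by (simp add: card_image)
qed




lemma edge_sub:
  assumes "simple_graph G" "e \<in> edges G" shows "e \<subseteq> verts G"
proof -
  obtain u v where "u \<in> verts G" "v \<in> verts G" "e = {u, v}"
    using assms unfolding simple_graph_def by blast
  then show ?thesis by simp
qed

lemma relabel:
  assumes "simple_graph G"
  shows "\<exists>G'. graph_iso G G' \<and> simple_graph G' \<and> verts G' = {..<card (verts G)} \<and>
              edges G' \<subseteq> Pow {..<card (verts G)}"
proof -
  let ?V = "verts G" let ?m = "card (verts G)"
  obtain h where h: "bij_betw h ?V {0..<?m}" using ex_bij_betw_finite_nat simple_fin[OF assms] by blast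
  have inj: "inj_on h ?V" using h bij_betw_def by blast
  have himg: "h ` ?V = {..<?m}" using h bij_betw_def atLeast0LessThan by metis
  define G' where "G' = ({..<?m}, (image h) ` edges G)"
  have vG': "verts G' = {..<?m}" and eG': "edges G' = (image h) ` edges G"
    unfolding G'_def verts_def edges_def by auto
  have eV: "\<forall>e\<in>edges G. \<exists>u v. u \<noteq> v \<and> u \<in> ?V \<and> v \<in> ?V \<and> e = {u, v}"
    using assms unfolding simple_graph_def by blast
  have simp': "simple_graph G'"
    unfolding simple_graph_def
  proof (intro conjI ballI)
    show "finite (verts G')" using vG' by simp
  next
    fix e' assume "e' \<in> edges G'"
    then obtain e where e: "e \<in> edges G" "e' = h ` e" using eG' by blast
    then obtain u v where uv: "u \<noteq> v" "u \<in> ?V" "v \<in> ?V" "e = {u,v}" using eV by blast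
    have "h u \<noteq> h v" using uv inj inj_on_def by metis
    moreover have "h u \<in> verts G'" "h v \<in> verts G'" using uv himg vG' by auto
    ultimately show "\<exists>u v. u \<noteq> v \<and> u \<in> verts G' \<and> v \<in> verts G' \<and> e' = {u, v}"
      using e uv by auto
  qed
  have "edges G' \<subseteq> Pow {..<?m}"
  proof
    fix e' assume "e' \<in> edges G'"
    then obtain e where e: "e \<in> edges G" "e' = h ` e" using eG' by blast
    then have "e \<subseteq> ?V" using edge_sub[OF assms] by blast
    then show "e' \<in> Pow {..<?m}" using e himg by auto
  qed
  moreover have "graph_iso G G'"
    unfolding graph_iso_def
  proof (intro exI conjI ballI)
    show "bij_betw h ?V (verts G')" using h vG' atLeast0LessThan by simp
  next
    fix u v assume uv: "u \<in> ?V" "v \<in> ?V"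
    have "adj G' (h u) (h v) \<longleftrightarrow> (\<exists>e\<in>edges G. h ` e = h ` {u, v})"
      unfolding adj_def eG' by auto
    also have "\<dots> \<longleftrightarrow> (\<exists>e\<in>edges G. e = {u, v})"
    proof -
      have "\<And>e. e \<in> edges G \<Longrightarrow> h ` e = h ` {u, v} \<longleftrightarrow> e = {u,v}"
      proof -
        fix e assume "e \<in> edges G"
        then have "e \<subseteq> ?V" using edge_sub[OF assms] by blast
        then show "h ` e = h ` {u, v} \<longleftrightarrow> e = {u,v}" using inj_on_image_eq_iff[OF inj, of e "{u,v}"] uv by (simp del: image_insert image_empty)
      qed
      then show ?thesis by blast
    qed
    also have "\<dots> \<longleftrightarrow> adj G u v" unfolding adj_def by auto
    finally show "adj G u v \<longleftrightarrow> adj G' (h u) (h v)" by simp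
  qed
  ultimately show ?thesis using simp' vG' by blast
qed

definition "gset P = {G. simple_graph G \<and> connected_graph G \<and> indep_poly G = P}"

lemma num_eq: "num_graphs_with_poly P = card (gset P // isoR)"
  unfolding num_graphs_with_poly_def gset_def isoR_def by simp

lemma quotient_finite: "finite (gset P // isoR)"
proof -
  let ?m = "nat (coeff P 1)"
  let ?C = "{{..<?m}} \<times> Pow (Pow {..<?m})"
  have "gset P // isoR \<subseteq> (\<lambda>G. isoR``{G}) ` ?C"
  proof
    fix X assume "X \<in> gset P // isoR"
    then obtain G where G: "G \<in> gset P" "X = isoR``{G}" by (auto elim: quotientE)
    then have sG: "simple_graph G" and pG: "indep_poly G = P" unfolding gset_def by auto
    have m: "card (verts G) = ?m" using card_verts_poly[OF sG pG] by simp
    obtain G' where G': "graph_iso G G'" "verts G' = {..<?m}" "edges G' \<subseteq> Pow {..<?m}"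
      using relabel[OF sG] m by auto
    have "isoR``{G} = isoR``{G'}"
      using equiv_class_eq[OF equiv_isoR] G'(1) unfolding isoR_def by blast
    moreover have "G' \<in> ?C" using G'(2,3) unfolding verts_def edges_def by (cases G') auto
    ultimately show "X \<in> (\<lambda>G. isoR``{G}) ` ?C" using G by blast
  qed
  then show ?thesis by (rule finite_subset) simp
qed

lemma lower_bound:
  assumes "\<forall>i<k. gs i \<in> gset P" "\<forall>i<k. \<forall>j<k. graph_iso (gs i) (gs j) \<longrightarrow> i = j"
  shows "k \<le> num_graphs_with_poly P"
proof -
  have inj: "inj_on (\<lambda>i. isoR``{gs i}) {..<k}"
  proof (rule inj_onI)
    fix i j assume ij: "i \<in> {..<k}" "j \<in> {..<k}" "isoR``{gs i} = isoR``{gs j}"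
    then have "(gs i, gs j) \<in> isoR" using equiv_class_eq_iff[OF equiv_isoR] by blast
    then show "i = j" using assms(2) ij unfolding isoR_def by auto
  qed
  have "(\<lambda>i. isoR``{gs i}) ` {..<k} \<subseteq> gset P // isoR"
    using assms(1) by (auto intro: quotientI)
  then have "card ((\<lambda>i. isoR``{gs i}) ` {..<k}) \<le> card (gset P // isoR)"
    by (rule card_mono[OF quotient_finite])
  then show ?thesis using card_image[OF inj] num_eq by simp
qed




lemma adjf_sym: "adjf ne u w = adjf ne w u" unfolding adjf_def by auto
lemma adjf_irr: "\<not> adjf ne u u" unfolding adjf_def by auto

lemma verts_G_of[simp]: "verts (G_of n ne) = {..<n}" unfolding G_of_def verts_def by simp

lemma adj_G_of: "adj (G_of n ne) u v \<longleftrightarrow> u < n \<and> v < n \<and> adjf ne u v"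
  unfolding adj_def G_of_def edges_def using adjf_sym by (auto simp: doubleton_eq_iff)

lemma simple_G_of: "simple_graph (G_of n ne)"
  unfolding simple_graph_def G_of_def verts_def edges_def adjf_def by auto

lemma indep_count_G_of: "indep_count (G_of n ne) k = cnt (adjf ne) [0..<n] k"
proof -
  have "{S. independent_set (G_of n ne) S \<and> card S = k} =
        {S. S \<subseteq> set [0..<n] \<and> (\<forall>u\<in>S. \<forall>w\<in>S. \<not> adjf ne u w) \<and> card S = k}"
    unfolding independent_set_def adj_G_of by auto
  then show ?thesis unfolding indep_count_def
    using cnt_correct[of "[0..<n]" "adjf ne" k] adjf_sym adjf_irr by simp
qed

lemma cnt_zero_Suc: "cnt A vs k = 0 \<Longrightarrow> cnt A vs (Suc k) = 0"
proof (induction A vs k rule: cnt.induct)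
  case (1 A k) then show ?case by simp
next
  case (2 A v vs k)
  then show ?case by (cases k) auto
qed

lemma cnt_zero_mono: assumes "k \<le> k'" "cnt A vs k = 0" shows "cnt A vs k' = 0"
  using assms
proof (induction k' rule: dec_induct)
  case base then show ?case by simp
next
  case (step k') then show ?case using cnt_zero_Suc by blast
qed

definition pok :: "nat \<Rightarrow> (nat \<times> nat) list \<Rightarrow> nat list \<Rightarrow> bool" where
  "pok n ne cs \<longleftrightarrow> map (cnt (adjf ne) [0..<n]) [0..<Suc (length cs)] = cs @ [0]"

lemma pok_poly:
  assumes "pok n ne cs" shows "indep_poly (G_of n ne) = Poly (map int cs)"
proof (rule indep_poly_eqI)
  show "finite (verts (G_of n ne))" by simp
next
  fix i
  have eq: "\<And>j. j \<le> length cs \<Longrightarrow> cnt (adjf ne) [0..<n] j = (cs @ [0]) ! j"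
    using assms unfolding pok_def by (metis (no_types, lifting) add_0 diff_zero le_imp_less_Suc length_upt nth_map nth_upt)
  show "int (indep_count (G_of n ne) i) = coeff (Poly (map int cs)) i"
  proof (cases "i < length cs")
    case True
    then show ?thesis using eq[of i] by (simp add: indep_count_G_of nth_default_def nth_append)
  next
    case False
    have "cnt (adjf ne) [0..<n] (length cs) = 0" using eq[of "length cs"] by simp
    then have "cnt (adjf ne) [0..<n] i = 0" using False cnt_zero_mono[of "length cs" i] by simp
    then show ?thesis using False by (simp add: indep_count_G_of nth_default_def)
  qed
qed

definition conok :: "nat \<Rightarrow> (nat \<times> nat) list \<Rightarrow> bool" where
  "conok n ne \<longleftrightarrow> 0 < n \<and> (\<forall>v\<in>set [0..<n]. v = 0 \<or> adjf ne 0 v \<or> (\<exists>w\<in>set [0..<n]. adjf ne 0 w \<and> adjf ne w v))"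

lemma conok_connected:
  assumes "conok n ne" shows "connected_graph (G_of n ne)"
proof -
  let ?A = "adj (G_of n ne)"
  have c: "\<And>v. v < n \<Longrightarrow> ?A\<^sup>*\<^sup>* 0 v \<and> ?A\<^sup>*\<^sup>* v 0"
  proof -
    fix v assume v: "v < n"
    have n0: "0 < n" using assms conok_def by blast
    have "v = 0 \<or> adjf ne 0 v \<or> (\<exists>w<n. adjf ne 0 w \<and> adjf ne w v)"
      using assms v unfolding conok_def by (simp add: Bex_def)
    then show "?A\<^sup>*\<^sup>* 0 v \<and> ?A\<^sup>*\<^sup>* v 0"
    proof (elim disjE exE conjE)
      assume "adjf ne 0 v"
      then have "?A 0 v" "?A v 0" using v n0 adjf_sym adj_G_of by metis+
      then show ?thesis by auto
    next
      fix w assume w: "w < n" "adjf ne 0 w" "adjf ne w v"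
      then have "?A 0 w" "?A w v" "?A v w" "?A w 0" using v n0 adjf_sym adj_G_of by metis+
      then show ?thesis by (meson converse_rtranclp_into_rtranclp r_into_rtranclp)
    qed simp
  qed
  show ?thesis unfolding connected_graph_def
    using c assms conok_def by (auto intro: rtranclp_trans)
qed




definition nd :: "graph \<Rightarrow> nat \<Rightarrow> nat" where
  "nd G u = card {w \<in> verts G. w \<noteq> u \<and> \<not> adj G u w}"

definition npairs :: "graph \<Rightarrow> (nat \<times> nat) set" where
  "npairs G = {p \<in> verts G \<times> verts G. fst p \<noteq> snd p \<and> \<not> adj G (fst p) (snd p)}"

definition sigm :: "graph \<Rightarrow> nat multiset" where
  "sigm G = image_mset (\<lambda>p. nd G (fst p) * 64 + nd G (snd p)) (mset_set (npairs G))"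

lemma iso_sigm:
  assumes "graph_iso G H" shows "sigm G = sigm H"
proof -
  obtain f where f: "bij_betw f (verts G) (verts H)"
    "\<forall>u\<in>verts G. \<forall>v\<in>verts G. adj G u v \<longleftrightarrow> adj H (f u) (f v)"
    using assms unfolding graph_iso_def by blast
  have inj: "inj_on f (verts G)" and img: "f ` verts G = verts H" using f(1) unfolding bij_betw_def by auto
  have ndeq: "nd H (f u) = nd G u" if u: "u \<in> verts G" for u
  proof -
    have "{w \<in> verts H. w \<noteq> f u \<and> \<not> adj H (f u) w} = f ` {w \<in> verts G. w \<noteq> u \<and> \<not> adj G u w}"
    proof (rule set_eqI, rule iffI)
      fix x assume x: "x \<in> {w \<in> verts H. w \<noteq> f u \<and> \<not> adj H (f u) w}"
      then obtain y where y: "y \<in> verts G" "x = f y" using img by auto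
      then show "x \<in> f ` {w \<in> verts G. w \<noteq> u \<and> \<not> adj G u w}" using x f(2) u by auto
    next
      fix x assume "x \<in> f ` {w \<in> verts G. w \<noteq> u \<and> \<not> adj G u w}"
      then obtain y where y: "y \<in> verts G" "y \<noteq> u" "\<not> adj G u y" "x = f y" by auto
      have "f y \<noteq> f u" using y u inj inj_on_def by metis
      then show "x \<in> {w \<in> verts H. w \<noteq> f u \<and> \<not> adj H (f u) w}" using y u f(2) img by auto
    qed
    then show ?thesis unfolding nd_def
      using card_image[OF inj_on_subset[OF inj]] by (metis (no_types, lifting) mem_Collect_eq subsetI)
  qed
  let ?F = "\<lambda>p. (f (fst p), f (snd p))"
  have inj2: "inj_on ?F (npairs G)"
    using inj unfolding npairs_def inj_on_def by (auto simp: prod_eq_iff)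
  have peq: "npairs H = ?F ` npairs G"
  proof (rule set_eqI, rule iffI)
    fix x assume x: "x \<in> npairs H"
    have "fst x \<in> f ` verts G" "snd x \<in> f ` verts G" using x img unfolding npairs_def by auto
    then obtain a b where "a \<in> verts G" "fst x = f a" "b \<in> verts G" "snd x = f b" by blast
    then have ab: "a \<in> verts G" "b \<in> verts G" "x = (f a, f b)" by (auto simp: prod_eq_iff)
    then have "(a,b) \<in> npairs G" using x f(2) unfolding npairs_def by auto
    then have "?F (a,b) \<in> ?F ` npairs G" by (rule imageI)
    then show "x \<in> ?F ` npairs G" using ab by simp
  next
    fix x assume "x \<in> ?F ` npairs G"
    then obtain a b where ab: "(a, b) \<in> npairs G" "x = (f a, f b)" by auto
    have "f a \<noteq> f b" using ab inj unfolding npairs_def inj_on_def by auto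
    then show "x \<in> npairs H" using ab f(2) img unfolding npairs_def by auto
  qed
  have "sigm H = image_mset (\<lambda>p. nd H (fst p) * 64 + nd H (snd p)) (image_mset ?F (mset_set (npairs G)))"
    unfolding sigm_def peq image_mset_mset_set[OF inj2] ..
  also have "\<dots> = image_mset (\<lambda>p. nd G (fst p) * 64 + nd G (snd p)) (mset_set (npairs G))"
    unfolding multiset.map_comp
  proof (rule image_mset_cong)
    fix p assume "p \<in># mset_set (npairs G)"
    then have "p \<in> npairs G" by (metis elem_mset_set empty_iff mset_set.infinite set_mset_empty)
    then show "((\<lambda>p. nd H (fst p) * 64 + nd H (snd p)) \<circ> ?F) p = nd G (fst p) * 64 + nd G (snd p)"
      using ndeq unfolding npairs_def by auto
  qed
  finally show ?thesis unfolding sigm_def by simp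
qed

definition valid :: "nat \<Rightarrow> (nat \<times> nat) list \<Rightarrow> bool" where
  "valid n ne \<longleftrightarrow> distinct ne \<and> (\<forall>p\<in>set ne. fst p < snd p \<and> snd p < n)"

definition dg :: "(nat \<times> nat) list \<Rightarrow> nat \<Rightarrow> nat" where
  "dg ne u = length (filter (\<lambda>p. fst p = u \<or> snd p = u) ne)"

definition sig :: "(nat \<times> nat) list \<Rightarrow> nat list" where
  "sig ne = sort (map (\<lambda>p. dg ne (fst p) * 64 + dg ne (snd p)) (ne @ map prod.swap ne))"

lemma nd_G_of:
  assumes "valid n ne" "u < n" shows "nd (G_of n ne) u = dg ne u"
proof -
  let ?oth = "\<lambda>p. if fst p = u then snd p else fst p"
  let ?L = "filter (\<lambda>p. fst p = u \<or> snd p = u) ne"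
  have vd: "distinct ne" "\<And>p. p \<in> set ne \<Longrightarrow> fst p < snd p \<and> snd p < n" using assms(1) valid_def by auto
  have eqset: "{w \<in> verts (G_of n ne). w \<noteq> u \<and> \<not> adj (G_of n ne) u w} = set (map ?oth ?L)"
  proof (rule set_eqI, rule iffI)
    fix w assume "w \<in> {w \<in> verts (G_of n ne). w \<noteq> u \<and> \<not> adj (G_of n ne) u w}"
    then have w: "w < n" "w \<noteq> u" "(u, w) \<in> set ne \<or> (w, u) \<in> set ne"
      using assms(2) by (auto simp: adj_G_of adjf_def)
    then have "((u,w) \<in> set ?L \<and> ?oth (u,w) = w) \<or> ((w,u) \<in> set ?L \<and> ?oth (w,u) = w)" by auto
    then show "w \<in> set (map ?oth ?L)"
    proof
      assume h: "(u,w) \<in> set ?L \<and> ?oth (u,w) = w"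
      then have "?oth (u,w) \<in> ?oth ` set ?L" by (intro imageI) blast
      then show ?thesis using h by simp
    next
      assume h: "(w,u) \<in> set ?L \<and> ?oth (w,u) = w"
      then have "?oth (w,u) \<in> ?oth ` set ?L" by (intro imageI) blast
      then show ?thesis using h by simp
    qed
  next
    fix w assume "w \<in> set (map ?oth ?L)"
    then obtain p where p: "p \<in> set ne" "fst p = u \<or> snd p = u" "w = ?oth p" by auto
    have "fst p < snd p" "snd p < n" using vd(2)[OF p(1)] by auto
    then show "w \<in> {w \<in> verts (G_of n ne). w \<noteq> u \<and> \<not> adj (G_of n ne) u w}"
      using p assms(2) by (cases p) (auto simp: adj_G_of adjf_def)
  qed
  have dist: "distinct (map ?oth ?L)"
  proof -
    have "inj_on ?oth (set ?L)"
    proof (rule inj_onI)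
      fix p q assume pq: "p \<in> set ?L" "q \<in> set ?L" "?oth p = ?oth q"
      have "fst p < snd p" "fst q < snd q" using pq vd(2) by auto
      then show "p = q" using pq by (cases p, cases q) (auto split: if_splits)
    qed
    then show ?thesis using vd(1) by (simp add: distinct_map)
  qed
  have "card {w \<in> verts (G_of n ne). w \<noteq> u \<and> \<not> adj (G_of n ne) u w} = length (map ?oth ?L)"
    unfolding eqset by (rule distinct_card[OF dist])
  then show ?thesis unfolding nd_def dg_def by simp
qed

lemma sigm_G_of:
  assumes "valid n ne" shows "sigm (G_of n ne) = mset (sig ne)"
proof -
  have vd: "distinct ne" "\<And>p. p \<in> set ne \<Longrightarrow> fst p < snd p \<and> snd p < n" using assms(1) valid_def by auto
  let ?xs = "ne @ map prod.swap ne"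
  have npeq: "npairs (G_of n ne) = set ?xs"
  proof (rule set_eqI)
    fix p :: "nat \<times> nat"
    obtain a b where p: "p = (a, b)" by (cases p)
    show "p \<in> npairs (G_of n ne) \<longleftrightarrow> p \<in> set ?xs"
      using vd(2)[of "(a,b)"] vd(2)[of "(b,a)"] unfolding p npairs_def
      by (auto simp: adj_G_of adjf_def)
  qed
  have dxs: "distinct ?xs"
  proof -
    have "distinct (map prod.swap ne)" using vd(1) by (simp add: distinct_map)
    moreover have "set ne \<inter> set (map prod.swap ne) = {}"
    proof (rule ccontr)
      assume "set ne \<inter> set (map prod.swap ne) \<noteq> {}"
      then obtain p where p: "p \<in> set ne" "p \<in> set (map prod.swap ne)" by blast
      then obtain q where "q \<in> set ne" "p = prod.swap q" by auto
      then show False using p using vd(2)[of p] vd(2)[of q] by (cases q) auto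
    qed
    ultimately show ?thesis using vd(1) by simp
  qed
  have "mset_set (npairs (G_of n ne)) = mset ?xs" unfolding npeq by (rule mset_set_set[OF dxs])
  then have "sigm (G_of n ne) = mset (map (\<lambda>p. nd (G_of n ne) (fst p) * 64 + nd (G_of n ne) (snd p)) ?xs)"
    unfolding sigm_def by (simp only: mset_map)
  also have "\<dots> = mset (map (\<lambda>p. dg ne (fst p) * 64 + dg ne (snd p)) ?xs)"
  proof -
    have "\<And>p. p \<in> set ?xs \<Longrightarrow> fst p < n \<and> snd p < n" using vd(2) by force
    then show ?thesis using nd_G_of[OF assms] by (intro arg_cong[where f = mset] map_cong) auto
  qed
  finally show ?thesis unfolding sig_def by simp
qed

lemma noniso:
  assumes "valid n ne1" "valid n ne2" "graph_iso (G_of n ne1) (G_of n ne2)"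
  shows "sig ne1 = sig ne2"
proof -
  have "mset (sig ne1) = mset (sig ne2)" using iso_sigm[OF assms(3)] sigm_G_of assms(1,2) by metis
  moreover have "sorted (sig ne1)" "sorted (sig ne2)" unfolding sig_def by simp_all
  ultimately show ?thesis using properties_for_sort[of "sig ne2" "sig ne1"] sorted_sort_id[of "sig ne1"] by simp
qed




fun cntq :: "(nat \<times> nat list) list \<Rightarrow> nat \<Rightarrow> nat" where
  "cntq [] k = (if k = 0 then 1 else 0)"
| "cntq ((v,N)#r) k = (if k = 0 then 1 else cntq r k + cntq (filter (\<lambda>p. fst p \<in> set N) r) (k - 1))"

fun wfq :: "(nat \<Rightarrow> nat \<Rightarrow> bool) \<Rightarrow> (nat \<times> nat list) list \<Rightarrow> bool" where
  "wfq A [] = True"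
| "wfq A ((v,N)#r) = ((\<forall>p\<in>set r. \<not> A v (fst p) \<longleftrightarrow> fst p \<in> set N) \<and> wfq A r)"

lemma wfq_filter: "wfq A r \<Longrightarrow> wfq A (filter P r)"
  by (induction A r rule: wfq.induct) auto

lemma cntq_cnt: "wfq A xs \<Longrightarrow> cntq xs k = cnt A (map fst xs) k"
proof (induction xs k rule: cntq.induct)
  case (1 k) then show ?case by simp
next
  case (2 v N r k)
  show ?case
  proof (cases "k = 0")
    case True then show ?thesis by simp
  next
    case False
    have w: "\<forall>p\<in>set r. \<not> A v (fst p) \<longleftrightarrow> fst p \<in> set N" "wfq A r" using "2.prems" by auto
    have "filter (\<lambda>u. \<not> A v u) (map fst r) = map fst (filter (\<lambda>p. fst p \<in> set N) r)"
      unfolding filter_map o_def using w(1) by (intro arg_cong[where f = "map fst"] filter_cong) auto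
    then show ?thesis using "2.IH" False w(2) wfq_filter by simp
  qed
qed

definition fwd :: "(nat \<times> nat) list \<Rightarrow> nat \<Rightarrow> nat list" where
  "fwd ne v = map snd (filter (\<lambda>p. fst p = v) ne)"

lemma wfq_fwd:
  assumes "sorted_wrt (<) vs" "\<forall>p\<in>set ne. fst p < snd p"
  shows "wfq (adjf ne) (map (\<lambda>v. (v, fwd ne v)) vs)"
  using assms(1)
proof (induction vs)
  case Nil then show ?case by simp
next
  case (Cons v vs)
  have "\<forall>u\<in>set vs. \<not> adjf ne v u \<longleftrightarrow> u \<in> set (fwd ne v)"
  proof
    fix u assume u: "u \<in> set vs"
    then have vu: "v < u" using Cons.prems by simp
    have "(u, v) \<notin> set ne" using assms(2) vu by force
    then show "\<not> adjf ne v u \<longleftrightarrow> u \<in> set (fwd ne v)"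
      using vu unfolding adjf_def fwd_def by force
  qed
  then show ?case using Cons by simp
qed

definition pokq :: "nat \<Rightarrow> (nat \<times> nat) list \<Rightarrow> nat list \<Rightarrow> bool" where
  "pokq n ne cs \<longleftrightarrow> map (cntq (map (\<lambda>v. (v, fwd ne v)) [0..<n])) [0..<Suc (length cs)] = cs @ [0]"

lemma pokq_pok: assumes "valid n ne" "pokq n ne cs" shows "pok n ne cs"
proof -
  have "\<And>k. cntq (map (\<lambda>v. (v, fwd ne v)) [0..<n]) k = cnt (adjf ne) [0..<n] k"
    using cntq_cnt[OF wfq_fwd[of "[0..<n]" ne]] assms(1) unfolding valid_def
    by (simp add: o_def sorted_wrt_upt)
  then have "cntq (map (\<lambda>v. (v, fwd ne v)) [0..<n]) = cnt (adjf ne) [0..<n]" by (rule ext)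
  then show ?thesis using assms(2) unfolding pok_def pokq_def by simp
qed




lemma iso_nd:
  assumes f: "bij_betw f (verts G) (verts H)"
    "\<forall>u\<in>verts G. \<forall>v\<in>verts G. adj G u v \<longleftrightarrow> adj H (f u) (f v)"
    and u: "u \<in> verts G"
  shows "nd H (f u) = nd G u"
proof -
  have inj: "inj_on f (verts G)" and img: "f ` verts G = verts H" using f(1) unfolding bij_betw_def by auto
  have "{w \<in> verts H. w \<noteq> f u \<and> \<not> adj H (f u) w} = f ` {w \<in> verts G. w \<noteq> u \<and> \<not> adj G u w}"
  proof (rule set_eqI, rule iffI)
    fix x assume x: "x \<in> {w \<in> verts H. w \<noteq> f u \<and> \<not> adj H (f u) w}"
    then obtain y where y: "y \<in> verts G" "x = f y" using img by auto
    then show "x \<in> f ` {w \<in> verts G. w \<noteq> u \<and> \<not> adj G u w}" using x f(2) u by auto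
  next
    fix x assume "x \<in> f ` {w \<in> verts G. w \<noteq> u \<and> \<not> adj G u w}"
    then obtain y where y: "y \<in> verts G" "y \<noteq> u" "\<not> adj G u y" "x = f y" by auto
    have "f y \<noteq> f u" using y u inj inj_on_def by metis
    then show "x \<in> {w \<in> verts H. w \<noteq> f u \<and> \<not> adj H (f u) w}" using y u f(2) img by auto
  qed
  then show ?thesis unfolding nd_def
    using card_image[OF inj_on_subset[OF inj]] by (metis (no_types, lifting) mem_Collect_eq subsetI)
qed

definition sigd :: "graph \<Rightarrow> nat multiset" where
  "sigd G = image_mset (nd G) (mset_set (verts G))"

lemma iso_sigd:
  assumes "graph_iso G H" shows "sigd G = sigd H"
proof -
  obtain f where f: "bij_betw f (verts G) (verts H)"
    "\<forall>u\<in>verts G. \<forall>v\<in>verts G. adj G u v \<longleftrightarrow> adj H (f u) (f v)"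
    using assms unfolding graph_iso_def by blast
  have inj: "inj_on f (verts G)" and img: "f ` verts G = verts H" using f(1) unfolding bij_betw_def by auto
  have "sigd H = image_mset (nd H) (image_mset f (mset_set (verts G)))"
    unfolding sigd_def image_mset_mset_set[OF inj] img ..
  also have "\<dots> = image_mset (nd G) (mset_set (verts G))"
    unfolding multiset.map_comp
  proof (rule image_mset_cong)
    fix u assume "u \<in># mset_set (verts G)"
    then have "u \<in> verts G" by (metis elem_mset_set empty_iff mset_set.infinite set_mset_empty)
    then show "(nd H \<circ> f) u = nd G u" using iso_nd[OF f] by simp
  qed
  finally show ?thesis unfolding sigd_def by simp
qed

definition dsq :: "nat \<Rightarrow> (nat \<times> nat) list \<Rightarrow> nat list" where
  "dsq n ne = sort (map (dg ne) [0..<n])"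

lemma sigd_G_of:
  assumes "valid n ne" shows "sigd (G_of n ne) = mset (dsq n ne)"
proof -
  have "mset_set (verts (G_of n ne)) = mset [0..<n]"
    using mset_set_set[of "[0..<n]"] by (simp add: atLeast0LessThan)
  then have "sigd (G_of n ne) = mset (map (nd (G_of n ne)) [0..<n])" unfolding sigd_def by simp
  also have "\<dots> = mset (map (dg ne) [0..<n])"
    using nd_G_of[OF assms] by (intro arg_cong[where f = mset] map_cong) auto
  finally show ?thesis unfolding dsq_def by simp
qed

lemma noniso_d:
  assumes "valid n ne1" "valid n ne2" "graph_iso (G_of n ne1) (G_of n ne2)"
  shows "dsq n ne1 = dsq n ne2"
proof -
  have "mset (dsq n ne1) = mset (dsq n ne2)" using iso_sigd[OF assms(3)] sigd_G_of assms(1,2) by metis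
  moreover have "sorted (dsq n ne1)" "sorted (dsq n ne2)" unfolding dsq_def by simp_all
  ultimately show ?thesis using properties_for_sort[of "dsq n ne2" "dsq n ne1"] sorted_sort_id[of "dsq n ne1"] by simp
qed

lemma bound_list:
  assumes "list_all (\<lambda>ne. valid n ne \<and> pokq n ne cs \<and> conok n ne) L" "distinct (map iv L)"
    "\<And>ne1 ne2. valid n ne1 \<Longrightarrow> valid n ne2 \<Longrightarrow> graph_iso (G_of n ne1) (G_of n ne2) \<Longrightarrow> iv ne1 = iv ne2"
  shows "length L \<le> num_graphs_with_poly (Poly (map int cs))"
proof (rule lower_bound[where gs = "\<lambda>i. G_of n (L ! i)"])
  show "\<forall>i<length L. G_of n (L ! i) \<in> gset (Poly (map int cs))"
    using assms(1) unfolding gset_def list_all_length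
    by (auto intro: simple_G_of conok_connected pok_poly pokq_pok)
next
  show "\<forall>i<length L. \<forall>j<length L. graph_iso (G_of n (L ! i)) (G_of n (L ! j)) \<longrightarrow> i = j"
  proof (intro allI impI)
    fix i j assume ij: "i < length L" "j < length L" "graph_iso (G_of n (L ! i)) (G_of n (L ! j))"
    then have "iv (L ! i) = iv (L ! j)" using assms(1,3) unfolding list_all_length by blast
    then show "i = j" using assms(2) ij nth_eq_iff_index_eq[of "map iv L" i j] by simp
  qed
qed




definition pne :: "(nat \<times> nat) list" where "pne = [(0,3),(1,2),(1,3)]"

lemma four_stage1:
  fixes A :: "nat \<Rightarrow> nat \<Rightarrow> bool"
  assumes sym: "\<And>u v. A u v = A v u" and irr: "\<And>u. \<not> A u u"
    and c2: "cnt A [a,b,c,d] 2 = 3" and c3: "cnt A [a,b,c,d] 3 = 0"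
    and nz: "A a b \<or> A a c \<or> A a d" "A b a \<or> A b c \<or> A b d" "A c a \<or> A c b \<or> A c d" "A d a \<or> A d b \<or> A d c"
  shows "(A a b \<and> A a c \<and> \<not> A a d \<and> \<not> A b c \<and> \<not> A b d \<and> A c d) \<or>
     (A a b \<and> \<not> A a c \<and> A a d \<and> \<not> A b c \<and> \<not> A b d \<and> A c d) \<or>
     (A a b \<and> A a c \<and> \<not> A a d \<and> \<not> A b c \<and> A b d \<and> \<not> A c d) \<or>
     (A a b \<and> \<not> A a c \<and> A a d \<and> A b c \<and> \<not> A b d \<and> \<not> A c d) \<or>
     (\<not> A a b \<and> A a c \<and> A a d \<and> \<not> A b c \<and> A b d \<and> \<not> A c d) \<or>
     (\<not> A a b \<and> A a c \<and> A a d \<and> A b c \<and> \<not> A b d \<and> \<not> A c d) \<or>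
     (A a b \<and> \<not> A a c \<and> \<not> A a d \<and> A b c \<and> \<not> A b d \<and> A c d) \<or>
     (A a b \<and> \<not> A a c \<and> \<not> A a d \<and> \<not> A b c \<and> A b d \<and> A c d) \<or>
     (\<not> A a b \<and> A a c \<and> \<not> A a d \<and> A b c \<and> A b d \<and> \<not> A c d) \<or>
     (\<not> A a b \<and> \<not> A a c \<and> A a d \<and> A b c \<and> A b d \<and> \<not> A c d) \<or>
     (\<not> A a b \<and> A a c \<and> \<not> A a d \<and> \<not> A b c \<and> A b d \<and> A c d) \<or>
     (\<not> A a b \<and> \<not> A a c \<and> A a d \<and> A b c \<and> \<not> A b d \<and> A c d)"
proof -
  have s: "A b a = A a b" "A c a = A a c" "A d a = A a d" "A c b = A b c" "A d b = A b d" "A d c = A c d"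
    using sym by auto
  have i: "A a a = False" "A b b = False" "A c c = False" "A d d = False" using irr by auto
  show ?thesis using c2 c3 nz
    by (cases "A a b"; cases "A a c"; cases "A a d"; cases "A b c"; cases "A b d"; cases "A c d";
        simp add: s i)
qed

lemma four_class:
  fixes A :: "nat \<Rightarrow> nat \<Rightarrow> bool"
  assumes sym: "\<And>u v. A u v = A v u" and irr: "\<And>u. \<not> A u u"
    and c2: "cnt A [0..<4] 2 = 3" and c3: "cnt A [0..<4] 3 = 0"
    and nz: "A 0 1 \<or> A 0 2 \<or> A 0 3" "A 1 0 \<or> A 1 2 \<or> A 1 3" "A 2 0 \<or> A 2 1 \<or> A 2 3" "A 3 0 \<or> A 3 1 \<or> A 3 2"
  shows "\<exists>\<sigma>. distinct \<sigma> \<and> length \<sigma> = 4 \<and> list_all (\<lambda>x. x < 4) \<sigma> \<and> (\<forall>u\<in>set [0,1,2,3]. \<forall>v\<in>set [0,1,2,3]. A u v = adjf pne (\<sigma>!u) (\<sigma>!v))"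
proof -
  have s: "A (Suc 0) 0 = A 0 (Suc 0)" "A 2 0 = A 0 2" "A 3 0 = A 0 3" "A 2 (Suc 0) = A (Suc 0) 2" "A 3 (Suc 0) = A (Suc 0) 3" "A 3 2 = A 2 3"
    using sym by auto
  have i: "A 0 0 = False" "A (Suc 0) (Suc 0) = False" "A 2 2 = False" "A 3 3 = False" using irr by auto
  have l: "[0..<4] = [0,1,2,3::nat]" by (simp add: upt_rec)
  have "(A 0 1 \<and> A 0 2 \<and> \<not> A 0 3 \<and> \<not> A 1 2 \<and> \<not> A 1 3 \<and> A 2 3) \<or>
     (A 0 1 \<and> \<not> A 0 2 \<and> A 0 3 \<and> \<not> A 1 2 \<and> \<not> A 1 3 \<and> A 2 3) \<or>
     (A 0 1 \<and> A 0 2 \<and> \<not> A 0 3 \<and> \<not> A 1 2 \<and> A 1 3 \<and> \<not> A 2 3) \<or>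
     (A 0 1 \<and> \<not> A 0 2 \<and> A 0 3 \<and> A 1 2 \<and> \<not> A 1 3 \<and> \<not> A 2 3) \<or>
     (\<not> A 0 1 \<and> A 0 2 \<and> A 0 3 \<and> \<not> A 1 2 \<and> A 1 3 \<and> \<not> A 2 3) \<or>
     (\<not> A 0 1 \<and> A 0 2 \<and> A 0 3 \<and> A 1 2 \<and> \<not> A 1 3 \<and> \<not> A 2 3) \<or>
     (A 0 1 \<and> \<not> A 0 2 \<and> \<not> A 0 3 \<and> A 1 2 \<and> \<not> A 1 3 \<and> A 2 3) \<or>
     (A 0 1 \<and> \<not> A 0 2 \<and> \<not> A 0 3 \<and> \<not> A 1 2 \<and> A 1 3 \<and> A 2 3) \<or>
     (\<not> A 0 1 \<and> A 0 2 \<and> \<not> A 0 3 \<and> A 1 2 \<and> A 1 3 \<and> \<not> A 2 3) \<or>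
     (\<not> A 0 1 \<and> \<not> A 0 2 \<and> A 0 3 \<and> A 1 2 \<and> A 1 3 \<and> \<not> A 2 3) \<or>
     (\<not> A 0 1 \<and> A 0 2 \<and> \<not> A 0 3 \<and> \<not> A 1 2 \<and> A 1 3 \<and> A 2 3) \<or>
     (\<not> A 0 1 \<and> \<not> A 0 2 \<and> A 0 3 \<and> A 1 2 \<and> \<not> A 1 3 \<and> A 2 3)" by (rule four_stage1[of A 0 1 2 3, OF sym irr c2[unfolded l] c3[unfolded l] nz])
  then show ?thesis
  proof (elim disjE)
    assume h: "(A 0 1 \<and> A 0 2 \<and> \<not> A 0 3 \<and> \<not> A 1 2 \<and> \<not> A 1 3 \<and> A 2 3)"
    show ?thesis
      by (rule exI[of _ "[0,1,2,3]"]) (use h in \<open>simp add: s i pne_def adjf_def One_nat_def\<close>)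
  next
    assume h: "(A 0 1 \<and> \<not> A 0 2 \<and> A 0 3 \<and> \<not> A 1 2 \<and> \<not> A 1 3 \<and> A 2 3)"
    show ?thesis
      by (rule exI[of _ "[0,1,3,2]"]) (use h in \<open>simp add: s i pne_def adjf_def One_nat_def\<close>)
  next
    assume h: "(A 0 1 \<and> A 0 2 \<and> \<not> A 0 3 \<and> \<not> A 1 2 \<and> A 1 3 \<and> \<not> A 2 3)"
    show ?thesis
      by (rule exI[of _ "[0,2,1,3]"]) (use h in \<open>simp add: s i pne_def adjf_def One_nat_def\<close>)
  next
    assume h: "(A 0 1 \<and> \<not> A 0 2 \<and> A 0 3 \<and> A 1 2 \<and> \<not> A 1 3 \<and> \<not> A 2 3)"
    show ?thesis
      by (rule exI[of _ "[0,2,3,1]"]) (use h in \<open>simp add: s i pne_def adjf_def One_nat_def\<close>)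
  next
    assume h: "(\<not> A 0 1 \<and> A 0 2 \<and> A 0 3 \<and> \<not> A 1 2 \<and> A 1 3 \<and> \<not> A 2 3)"
    show ?thesis
      by (rule exI[of _ "[0,3,1,2]"]) (use h in \<open>simp add: s i pne_def adjf_def One_nat_def\<close>)
  next
    assume h: "(\<not> A 0 1 \<and> A 0 2 \<and> A 0 3 \<and> A 1 2 \<and> \<not> A 1 3 \<and> \<not> A 2 3)"
    show ?thesis
      by (rule exI[of _ "[0,3,2,1]"]) (use h in \<open>simp add: s i pne_def adjf_def One_nat_def\<close>)
  next
    assume h: "(A 0 1 \<and> \<not> A 0 2 \<and> \<not> A 0 3 \<and> A 1 2 \<and> \<not> A 1 3 \<and> A 2 3)"
    show ?thesis
      by (rule exI[of _ "[1,0,2,3]"]) (use h in \<open>simp add: s i pne_def adjf_def One_nat_def\<close>)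
  next
    assume h: "(A 0 1 \<and> \<not> A 0 2 \<and> \<not> A 0 3 \<and> \<not> A 1 2 \<and> A 1 3 \<and> A 2 3)"
    show ?thesis
      by (rule exI[of _ "[1,0,3,2]"]) (use h in \<open>simp add: s i pne_def adjf_def One_nat_def\<close>)
  next
    assume h: "(\<not> A 0 1 \<and> A 0 2 \<and> \<not> A 0 3 \<and> A 1 2 \<and> A 1 3 \<and> \<not> A 2 3)"
    show ?thesis
      by (rule exI[of _ "[1,2,0,3]"]) (use h in \<open>simp add: s i pne_def adjf_def One_nat_def\<close>)
  next
    assume h: "(\<not> A 0 1 \<and> \<not> A 0 2 \<and> A 0 3 \<and> A 1 2 \<and> A 1 3 \<and> \<not> A 2 3)"
    show ?thesis
      by (rule exI[of _ "[1,2,3,0]"]) (use h in \<open>simp add: s i pne_def adjf_def One_nat_def\<close>)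
  next
    assume h: "(\<not> A 0 1 \<and> A 0 2 \<and> \<not> A 0 3 \<and> \<not> A 1 2 \<and> A 1 3 \<and> A 2 3)"
    show ?thesis
      by (rule exI[of _ "[1,3,0,2]"]) (use h in \<open>simp add: s i pne_def adjf_def One_nat_def\<close>)
  next
    assume h: "(\<not> A 0 1 \<and> \<not> A 0 2 \<and> A 0 3 \<and> A 1 2 \<and> \<not> A 1 3 \<and> A 2 3)"
    show ?thesis
      by (rule exI[of _ "[1,3,2,0]"]) (use h in \<open>simp add: s i pne_def adjf_def One_nat_def\<close>)
  qed
qed




definition okg :: "nat \<Rightarrow> nat list \<Rightarrow> (nat \<times> nat) list \<Rightarrow> bool" where
  "okg n cs ne \<longleftrightarrow> valid n ne \<and> pokq n ne cs \<and> conok n ne"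

definition L1 :: "(nat \<times> nat) list list" where
  "L1 = [
    [(0,8), (0,9), (1,8), (2,10), (3,4), (3,5), (3,6), (4,8), (5,9)],
    [(0,1), (0,7), (1,5), (3,8), (3,11), (5,7), (6,7), (7,9), (9,11)],
    [(0,8), (1,3), (1,9), (2,5), (4,7), (5,7), (5,8), (6,9), (6,11)],
    [(1,3), (1,10), (3,6), (4,9), (6,9), (6,10), (7,10), (9,11), (10,11)],
    [(0,3), (1,6), (3,4), (3,10), (3,11), (5,8), (5,11), (6,10), (9,10)],
    [(2,4), (2,5), (3,9), (4,10), (4,11), (5,10), (6,7), (6,9), (7,8)],
    [(0,7), (0,11), (1,2), (3,6), (3,7), (4,9), (5,8), (5,10), (7,8)],
    [(0,1), (1,3), (1,5), (2,3), (3,6), (3,8), (5,10), (5,11), (9,11)],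
    [(2,4), (2,7), (2,8), (3,5), (3,6), (5,7), (6,8), (8,9), (8,10)],
    [(0,5), (0,6), (1,2), (3,6), (4,10), (6,9), (6,11), (8,9), (9,10)]]"

definition L3 :: "(nat \<times> nat) list list" where
  "L3 = [
    [(0,5), (1,2), (1,6), (2,5), (2,7), (3,4), (3,5), (3,6)],
    [(0,7), (1,7), (2,5), (2,7), (3,6), (4,5), (4,7), (5,6)],
    [(0,1), (0,5), (1,2), (1,7), (2,6), (3,6), (5,7), (6,7)],
    [(0,5), (0,7), (1,3), (1,4), (2,3), (2,5), (3,6), (3,7)],
    [(0,3), (0,5), (1,6), (2,3), (2,5), (3,6), (4,7), (6,7)],
    [(0,2), (0,5), (1,5), (1,6), (2,4), (3,6), (4,7), (6,7)],
    [(0,5), (1,2), (1,3), (1,4), (2,6), (3,6), (3,7), (4,6)],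
    [(0,4), (0,6), (1,2), (1,5), (2,3), (3,6), (3,7), (4,7)],
    [(0,2), (0,5), (1,4), (2,3), (3,4), (4,6), (5,6), (6,7)],
    [(0,2), (0,7), (2,3), (2,6), (3,4), (4,5), (5,6), (6,7)],
    [(0,1), (0,3), (0,5), (1,7), (2,7), (3,4), (4,5), (4,6)],
    [(0,4), (1,5), (1,7), (2,7), (3,4), (3,7), (4,6), (5,6)],
    [(0,6), (1,2), (2,3), (3,4), (3,7), (4,5), (4,6), (5,7)],
    [(0,6), (0,7), (1,2), (1,6), (1,7), (2,5), (3,4), (5,6)],
    [(0,1), (0,3), (0,7), (2,4), (2,5), (2,7), (3,4), (3,6)],
    [(0,2), (0,5), (0,6), (0,7), (1,3), (3,5), (3,7), (4,7)],
    [(0,3), (0,7), (1,7), (2,5), (3,4), (3,6), (5,7), (6,7)],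
    [(0,3), (0,5), (1,5), (1,6), (4,5), (4,6), (5,7), (6,7)],
    [(0,3), (0,7), (1,2), (2,3), (2,5), (4,5), (5,6), (5,7)],
    [(0,1), (0,6), (1,7), (2,6), (3,4), (3,6), (5,7), (6,7)],
    [(0,6), (1,6), (1,7), (2,7), (3,7), (4,6), (4,7), (5,6)],
    [(0,6), (1,2), (1,6), (2,3), (2,4), (2,5), (4,6), (5,6)],
    [(0,1), (0,3), (0,7), (1,5), (1,6), (2,4), (3,6), (4,6)],
    [(1,2), (1,5), (2,3), (2,6), (2,7), (3,5), (5,6), (5,7)],
    [(0,4), (1,2), (1,6), (1,7), (2,5), (3,5), (3,6), (3,7)]]"

definition L4 :: "(nat \<times> nat) list list" where
  "L4 = [
    [(0,1), (0,2), (0,3), (0,5), (0,12), (0,14), (1,2), (1,3), (1,4), (1,7), (1,11), (1,12), (2,4), (2,5), (2,8), (2,10), (2,13), (3,8), (3,9), (3,10), (3,11), (3,13), (3,14), (4,5), (4,9), (4,12), (5,11), (5,12), (6,10), (6,11), (6,13), (6,14), (7,9), (7,12), (7,13), (7,14), (8,9), (8,14), (9,11), (9,12), (9,13), (10,11), (10,12), (11,12), (11,14)],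
    [(0,2), (0,3), (0,5), (0,8), (0,9), (0,11), (0,14), (1,3), (1,4), (1,8), (1,9), (1,10), (1,13), (1,14), (2,3), (2,5), (2,8), (2,10), (2,12), (2,13), (3,4), (3,6), (3,7), (3,9), (3,11), (4,7), (4,8), (4,10), (4,13), (5,9), (5,13), (6,8), (6,12), (6,13), (7,8), (7,12), (8,12), (8,14), (9,14), (10,11), (10,12), (11,12), (11,14), (12,13), (13,14)],
    [(0,3), (0,5), (0,6), (0,8), (0,10), (0,11), (0,13), (1,9), (1,10), (1,11), (1,13), (1,14), (2,4), (2,5), (2,7), (2,10), (2,11), (2,12), (2,14), (3,4), (3,8), (3,10), (3,11), (3,14), (4,6), (4,10), (4,12), (4,13), (5,9), (5,10), (5,14), (6,9), (6,11), (6,12), (6,14), (7,11), (7,14), (8,9), (8,12), (8,14), (9,10), (9,14), (10,13), (12,14), (13,14)],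
    [(0,6), (0,7), (0,11), (0,13), (1,5), (1,7), (1,8), (1,9), (1,10), (1,13), (2,3), (2,6), (2,8), (2,10), (3,7), (3,9), (3,12), (3,13), (3,14), (4,5), (4,9), (4,10), (4,11), (4,13), (4,14), (5,6), (5,11), (5,12), (5,13), (6,7), (6,8), (6,10), (6,11), (6,12), (6,14), (7,8), (7,12), (8,13), (8,14), (9,11), (9,13), (9,14), (10,12), (10,13), (12,13)]]"

definition L5 :: "(nat \<times> nat) list list" where
  "L5 = [
    [(1,7), (1,8), (2,5), (2,12), (3,5), (3,7), (3,9), (4,6), (4,7), (4,8), (4,11), (4,12), (5,8), (5,12), (7,8), (7,9), (7,10), (7,11), (8,10), (8,12), (10,11)],
    [(0,1), (0,4), (0,6), (0,12), (1,12), (2,5), (2,9), (3,6), (3,8), (4,5), (4,7), (4,8), (5,7), (5,8), (5,9), (5,11), (6,8), (6,12), (7,9), (8,9), (8,11)],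
    [(0,5), (0,10), (0,12), (1,6), (1,12), (3,4), (3,5), (3,8), (4,6), (4,7), (4,8), (4,11), (5,6), (5,12), (6,7), (6,8), (6,10), (6,11), (6,12), (10,11), (11,12)],
    [(0,1), (0,2), (0,4), (0,5), (1,3), (1,4), (1,5), (1,9), (2,4), (2,5), (2,10), (2,12), (3,5), (3,9), (3,11), (5,11), (6,9), (8,9), (8,12), (9,11), (10,12)],
    [(0,2), (0,3), (0,11), (1,4), (1,5), (1,9), (2,3), (2,6), (3,6), (3,7), (3,9), (3,12), (4,9), (5,8), (5,9), (6,7), (6,10), (6,12), (7,9), (7,10), (9,12)]]"

lemma L4_ok: "list_all (okg 15 [1,15,45,27]) L4"
  by (simp add: L4_def okg_def valid_def pokq_def fwd_def conok_def adjf_def upt_rec)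
lemma L4_d: "distinct (map (dsq 15) L4)"
  by (simp add: L4_def dsq_def dg_def upt_rec)

lemma L5_ok: "list_all (okg 13 [1,13,21,9]) L5"
  by (simp add: L5_def okg_def valid_def pokq_def fwd_def conok_def adjf_def upt_rec)
lemma L5_d: "distinct (map (dsq 13) L5)"
  by (simp add: L5_def dsq_def dg_def upt_rec)

lemma L1_ok: "list_all (okg 12 [1,12,9]) L1"
  by (simp add: L1_def okg_def valid_def pokq_def fwd_def conok_def adjf_def upt_rec)
lemma L1_d: "distinct (map (dsq 12) L1)"
  by (simp add: L1_def dsq_def dg_def upt_rec)

lemma L3_ok: "list_all (okg 8 [1,8,8]) L3"
  by (simp add: L3_def okg_def valid_def pokq_def fwd_def conok_def adjf_def upt_rec)
lemma L3_d: "distinct (map sig L3)"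
  by (simp add: L3_def sig_def dg_def)




lemma lt4: "y < (4::nat) \<Longrightarrow> y = 0 \<or> y = 1 \<or> y = 2 \<or> y = 3" by auto

lemma class_P2:
  assumes "G \<in> gset [:1,4,3:]"
  shows "graph_iso G (G_of 4 pne)"
proof -
  have sG: "simple_graph G" and cG: "connected_graph G" and pG: "indep_poly G = [:1,4,3:]"
    using assms unfolding gset_def by auto
  have c4: "card (verts G) = 4" using card_verts_poly[OF sG pG] by simp
  obtain G' where G': "graph_iso G G'" "simple_graph G'" "verts G' = {..<4}"
    using relabel[OF sG] c4 by auto
  let ?A = "adj G'"
  have symA: "\<And>u v. ?A u v = ?A v u" by (rule adj_sym)
  have irrA: "\<And>u. \<not> ?A u u" by (rule adj_irr[OF G'(2)])
  have ic: "\<And>k. indep_count G' k = cnt ?A [0..<4] k"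
  proof -
    fix k
    have "{S. independent_set G' S \<and> card S = k} =
          {S. S \<subseteq> set [0..<4] \<and> (\<forall>u\<in>S. \<forall>w\<in>S. \<not> ?A u w) \<and> card S = k}"
      unfolding independent_set_def G'(3) by (auto simp: atLeast0LessThan)
    then show "indep_count G' k = cnt ?A [0..<4] k"
      unfolding indep_count_def using cnt_correct[of "[0..<4]" ?A k] symA irrA by simp
  qed
  have icG: "\<And>k. int (indep_count G k) = coeff [:1,4,3:] k"
    using coeff_indep_poly[OF simple_fin[OF sG]] pG by simp
  have c2: "cnt ?A [0..<4] 2 = 3"
    using icG[of 2] iso_indep_count[OF G'(1) sG G'(2), of 2] ic[of 2] by (simp add: numeral_eq_Suc)
  have c3: "cnt ?A [0..<4] 3 = 0"
    using icG[of 3] iso_indep_count[OF G'(1) sG G'(2), of 3] ic[of 3] by (simp add: numeral_eq_Suc)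
  obtain f where f: "bij_betw f (verts G) (verts G')"
    "\<forall>u\<in>verts G. \<forall>v\<in>verts G. adj G u v \<longleftrightarrow> adj G' (f u) (f v)"
    using G'(1) unfolding graph_iso_def by blast
  have nzg: "\<exists>y<4. ?A x y" if x: "x < 4" for x
  proof -
    have "x \<in> f ` verts G" using x f(1) G'(3) unfolding bij_betw_def by auto
    then obtain x0 where x0: "x0 \<in> verts G" "x = f x0" by blast
    have "\<exists>y0\<in>verts G. y0 \<noteq> x0"
    proof (rule ccontr)
      assume "\<not> (\<exists>y0\<in>verts G. y0 \<noteq> x0)"
      then have "verts G \<subseteq> {x0}" by auto
      then have "card (verts G) \<le> card {x0}" by (intro card_mono) auto
      then have "card (verts G) \<le> 1" by simp
      then show False using c4 by simp
    qed
    then obtain y0 where y0: "y0 \<in> verts G" "y0 \<noteq> x0" by blast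
    have "(adj G)\<^sup>*\<^sup>* x0 y0" using cG x0 y0 unfolding connected_graph_def by blast
    then obtain z where z: "adj G x0 z" using y0(2) by (metis converse_rtranclpE)
    have zV: "z \<in> verts G" using adj_in[OF sG z] by simp
    have "?A x (f z)" using f(2) x0 zV z by blast
    moreover have "f z < 4" using zV f(1) G'(3) unfolding bij_betw_def by auto
    ultimately show ?thesis by blast
  qed
  have nz1: "?A x 0 \<or> ?A x 1 \<or> ?A x 2 \<or> ?A x 3" if "x < 4" for x
    using nzg[OF that] lt4 by metis
  have nz: "?A 0 1 \<or> ?A 0 2 \<or> ?A 0 3" "?A 1 0 \<or> ?A 1 2 \<or> ?A 1 3"
      "?A 2 0 \<or> ?A 2 1 \<or> ?A 2 3" "?A 3 0 \<or> ?A 3 1 \<or> ?A 3 2"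
    using nz1[of 0] nz1[of 1] nz1[of 2] nz1[of 3] irrA by auto
  obtain \<sigma> where \<sigma>: "distinct \<sigma>" "length \<sigma> = 4" "list_all (\<lambda>x. x < 4) \<sigma>"
    "\<forall>u\<in>set [0,1,2,3]. \<forall>v\<in>set [0,1,2,3]. ?A u v = adjf pne (\<sigma>!u) (\<sigma>!v)"
    using four_class[OF symA irrA c2 c3 nz] by blast
  have ss: "set \<sigma> \<subseteq> {..<4}" using \<sigma>(3) by (auto simp: list_all_iff)
  have "card (set \<sigma>) = card {..<4::nat}" using distinct_card[OF \<sigma>(1)] \<sigma>(2) by simp
  then have setS: "set \<sigma> = {..<4}" using card_subset_eq[OF _ ss] by simp
  have "graph_iso G' (G_of 4 pne)"
    unfolding graph_iso_def
  proof (intro exI[of _ "(!) \<sigma>"] conjI ballI)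
    show "bij_betw ((!) \<sigma>) (verts G') (verts (G_of 4 pne))"
      using bij_betw_nth[OF \<sigma>(1)] \<sigma>(2) setS G'(3) by simp
  next
    fix u v assume uv: "u \<in> verts G'" "v \<in> verts G'"
    then have "u \<in> set [0,1,2,3]" "v \<in> set [0,1,2,3]" using G'(3) lt4 by auto
    then have "?A u v = adjf pne (\<sigma>!u) (\<sigma>!v)" using \<sigma>(4) by blast
    moreover have "\<sigma>!u < 4" "\<sigma>!v < 4" using uv G'(3) \<sigma>(2) setS nth_mem by (metis lessThan_iff)+
    ultimately show "?A u v \<longleftrightarrow> adj (G_of 4 pne) (\<sigma>!u) (\<sigma>!v)" by (simp add: adj_G_of)
  qed
  then show ?thesis using iso_trans[OF G'(1)] by blast
qed

lemma path_ok: "okg 4 [1,4,3] pne"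
  by (simp add: pne_def okg_def valid_def pokq_def fwd_def conok_def adjf_def upt_rec)

lemma N2: "num_graphs_with_poly [:1,4,3:] = 1"
proof -
  have pin: "G_of 4 pne \<in> gset [:1,4,3:]"
    using path_ok pok_poly[OF pokq_pok] simple_G_of conok_connected
    unfolding okg_def gset_def by auto
  have "gset [:1,4,3:] // isoR = {isoR``{G_of 4 pne}}"
  proof
    show "gset [:1,4,3:] // isoR \<subseteq> {isoR``{G_of 4 pne}}"
    proof
      fix X assume "X \<in> gset [:1,4,3:] // isoR"
      then obtain G where G: "G \<in> gset [:1,4,3:]" "X = isoR``{G}" by (auto elim: quotientE)
      have "(G, G_of 4 pne) \<in> isoR" using class_P2[OF G(1)] unfolding isoR_def by simp
      then have "isoR``{G} = isoR``{G_of 4 pne}" using equiv_class_eq[OF equiv_isoR] by blast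
      then show "X \<in> {isoR``{G_of 4 pne}}" using G by simp
    qed
  next
    show "{isoR``{G_of 4 pne}} \<subseteq> gset [:1,4,3:] // isoR" using pin by (auto intro: quotientI)
  qed
  then show ?thesis using num_eq by simp
qed

lemma okg_list: "list_all (okg n cs) L \<Longrightarrow> list_all (\<lambda>ne. valid n ne \<and> pokq n ne cs \<and> conok n ne) L"
  by (simp add: okg_def list_all_iff)

lemma N1: "10 \<le> num_graphs_with_poly [:1,12,9:]"
  using bound_list[OF okg_list[OF L1_ok] L1_d noniso_d[of 12]] by (simp add: L1_def)
lemma N3: "25 \<le> num_graphs_with_poly [:1,8,8:]"
  using bound_list[OF okg_list[OF L3_ok] L3_d noniso[of 8]] by (simp add: L3_def)
lemma N4: "4 \<le> num_graphs_with_poly [:1,15,45,27:]"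
  using bound_list[OF okg_list[OF L4_ok] L4_d noniso_d[of 15]] by (simp add: L4_def)
lemma N5: "5 \<le> num_graphs_with_poly [:1,13,21,9:]"
  using bound_list[OF okg_list[OF L5_ok] L5_d noniso_d[of 13]] by (simp add: L5_def)

theorem lemma4p2:
  shows "num_graphs_with_poly [:1, 12, 9:] > 0 \<and> num_graphs_with_poly [:1, 4, 3:] > 0 \<and>
         num_graphs_with_poly [:1, 8, 8:] > 0 \<and> num_graphs_with_poly [:1, 15, 45, 27:] > 0 \<and>
         num_graphs_with_poly [:1, 13, 21, 9:] > 0 \<and>
         num_graphs_with_poly [:1, 12, 9:] \<ge> 10 \<and> num_graphs_with_poly [:1, 4, 3:] = 1 \<and>
         num_graphs_with_poly [:1, 8, 8:] \<ge> 25 \<and> num_graphs_with_poly [:1, 15, 45, 27:] \<ge> 4 \<and>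
         num_graphs_with_poly [:1, 13, 21, 9:] \<ge> 5"
  using N1 N2 N3 N4 N5 by simp


end
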